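(* Let $K$ be a number field, let $\alpha>1$ be rational, and let $F\in K[[x^{\mathbb{R}}]]$ be a Hahn series satisfying $\sum_{i=0}^d P_i(x)F(x^{\alpha^i})=0$ for some polynomials $P_0,\dots,P_d\in K[x]$ with $P_d\ne0$. Then there is a positive integer $l$ such that $P(F(x^l))\subseteq\mathbb{Z}[\alpha,\alpha^{-1}]$; moreover $F(x^l)$ is again such an $\alpha$-Mahler Hahn series.
   Context: $K[[x^{\mathbb{R}}]]$ is the field of Hahn series $\sum_{i\in\mathbb{R}} f_ix^i$ ($f_i\in K$) with well-ordered support $P(F)=\{i:f_i\ne0\}$; $F(x^\gamma)=\sum_if_ix^{\gamma i}$. $\mathbb{Z}[\alpha,\alpha^{-1}]$ is the subring of $\mathbb{Q}$ generated by $\alpha^{\pm1}$. "$\alpha$-Mahler" means satisfying a nontrivial homogeneous equation $\sum_{i=0}^{d'} Q_i(x)G(x^{\alpha^i})=0$ with $Q_i\in K[x]$, $Q_{d'}\neq 0$. *)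

theory Defs
  imports Complex_Main "HOL-Computational_Algebra.Polynomial"
begin

definition number_field_type :: "'k::field_char_0 itself \<Rightarrow> bool" where
  "number_field_type _ \<longleftrightarrow>
     (\<exists>B::'k set. finite B \<and> (\<forall>x::'k. \<exists>c::'k \<Rightarrow> rat. x = (\<Sum>b\<in>B. of_rat (c b) * b)))"

text \<open>Support of a Hahn series F = sum_i F i x^i (coefficient function real => K).\<close>
definition hahn_support :: "(real \<Rightarrow> 'k::zero) \<Rightarrow> real set" where
  "hahn_support F = {i. F i \<noteq> 0}"

definition well_ordered_set :: "real set \<Rightarrow> bool" where
  "well_ordered_set S \<longleftrightarrow> (\<forall>A. A \<subseteq> S \<longrightarrow> A \<noteq> {} \<longrightarrow> (\<exists>m\<in>A. \<forall>a\<in>A. m \<le> a))"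

definition hahn_series :: "(real \<Rightarrow> 'k::zero) \<Rightarrow> bool" where
  "hahn_series F \<longleftrightarrow> well_ordered_set (hahn_support F)"

text \<open>F(x^gamma) = sum_i F_i x^(gamma i); its coefficient at e is F(e/gamma).\<close>
definition hahn_subst :: "(real \<Rightarrow> 'k) \<Rightarrow> real \<Rightarrow> (real \<Rightarrow> 'k)" where
  "hahn_subst F \<gamma> = (\<lambda>e. F (e / \<gamma>))"

text \<open>Coefficientwise form of sum_{i=0}^d Q_i(x) G(x^(alpha^i)) = 0:
  the coefficient of x^e is sum_i sum_k coeff(Q_i,k) * G((e-k)/alpha^i).\<close>
definition mahler_eq :: "real \<Rightarrow> (nat \<Rightarrow> 'k::comm_ring_1 poly) \<Rightarrow> nat \<Rightarrow> (real \<Rightarrow> 'k) \<Rightarrow> bool" where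
  "mahler_eq \<alpha> Q d G \<longleftrightarrow>
     (\<forall>e::real. (\<Sum>i\<le>d. \<Sum>k\<le>degree (Q i). coeff (Q i) k * G ((e - real k) / \<alpha> ^ i)) = 0)"

definition is_mahler :: "real \<Rightarrow> (real \<Rightarrow> 'k::comm_ring_1) \<Rightarrow> bool" where
  "is_mahler \<alpha> G \<longleftrightarrow> (\<exists>d Q. Q d \<noteq> 0 \<and> mahler_eq \<alpha> Q d G)"

definition int_alpha_ring :: "real \<Rightarrow> real set" where
  "int_alpha_ring \<alpha> = {x. \<exists>S::int set. \<exists>c::int \<Rightarrow> int.
       finite S \<and> x = (\<Sum>k\<in>S. of_int (c k) * \<alpha> powi k)}"

end

theory Submission
  imports Defs
begin

lemma G_mem: "x \<in> int_alpha_ring a \<longleftrightarrow> (\<exists>S c. finite S \<and> x = (\<Sum>k\<in>S. of_int (c k) * a powi k))"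
  by (simp add: int_alpha_ring_def)

lemma G_add:
  assumes "x \<in> int_alpha_ring a" "y \<in> int_alpha_ring a"
  shows "x + y \<in> int_alpha_ring a"
proof -
  obtain S c where S: "finite S" "x = (\<Sum>k\<in>S. of_int (c k) * a powi k)" using assms(1) by (auto simp: G_mem)
  obtain T e where T: "finite T" "y = (\<Sum>k\<in>T. of_int (e k) * a powi k)" using assms(2) by (auto simp: G_mem)
  define U where "U = S \<union> T"
  define h where "h k = (if k \<in> S then c k else 0) + (if k \<in> T then e k else 0)" for k
  have fU: "finite U" using S T by (simp add: U_def)
  have "(\<Sum>k\<in>U. of_int (h k) * a powi k) =
        (\<Sum>k\<in>U. (if k \<in> S then of_int (c k) * a powi k else 0) + (if k \<in> T then of_int (e k) * a powi k else 0))"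
    by (rule sum.cong) (auto simp: h_def distrib_right)
  also have "\<dots> = (\<Sum>k\<in>U. (if k \<in> S then of_int (c k) * a powi k else 0)) + (\<Sum>k\<in>U. (if k \<in> T then of_int (e k) * a powi k else 0))"
    by (rule sum.distrib)
  also have "\<dots> = x + y"
  proof -
    have e1: "(\<Sum>k\<in>U. if k\<in>S then of_int (c k) * a powi k else 0) = x"
      using sum.inter_restrict[OF fU, of "\<lambda>k. of_int (c k) * a powi k" S] S(2) by (simp add: U_def)
    have e2: "(\<Sum>k\<in>U. if k\<in>T then of_int (e k) * a powi k else 0) = y"
      using sum.inter_restrict[OF fU, of "\<lambda>k. of_int (e k) * a powi k" T] T(2) by (simp add: U_def)
    show ?thesis using e1 e2 by simp
  qed
  finally have "x + y = (\<Sum>k\<in>U. of_int (h k) * a powi k)" by (rule sym)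
  then show ?thesis unfolding G_mem using fU by blast
qed

lemma G_intmult:
  assumes "x \<in> int_alpha_ring a"
  shows "of_int z * x \<in> int_alpha_ring a"
proof -
  obtain S c where S: "finite S" "x = (\<Sum>k\<in>S. of_int (c k) * a powi k)" using assms(1) by (auto simp: G_mem)
  have "of_int z * x = (\<Sum>k\<in>S. of_int z * (of_int (c k) * a powi k))"
    unfolding S(2) by (rule sum_distrib_left)
  also have "\<dots> = (\<Sum>k\<in>S. of_int (z * c k) * a powi k)"
    by (rule sum.cong) simp_all
  finally have e: "of_int z * x = (\<Sum>k\<in>S. of_int ((\<lambda>k. z * c k) k) * a powi k)" by simp
  show ?thesis unfolding G_mem by (rule exI[of _ S], rule exI[of _ "\<lambda>k. z * c k"]) (use S(1) e in simp)
qed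

lemma G_diff:
  assumes "x \<in> int_alpha_ring a" "y \<in> int_alpha_ring a"
  shows "x - y \<in> int_alpha_ring a"
  using G_add[OF assms(1) G_intmult[OF assms(2), of "-1"]] by simp

lemma G_powi:
  assumes "x \<in> int_alpha_ring a" "a \<noteq> 0"
  shows "a powi n * x \<in> int_alpha_ring a"
proof -
  obtain S c where S: "finite S" "x = (\<Sum>k\<in>S. of_int (c k) * a powi k)" using assms(1) by (auto simp: G_mem)
  have inj: "inj_on (\<lambda>k. k + n) S" by (auto simp: inj_on_def)
  have "(\<Sum>k\<in>(\<lambda>k. k + n) ` S. of_int (c (k - n)) * a powi k) = (\<Sum>k\<in>S. of_int (c k) * a powi (k + n))"
    by (simp add: sum.reindex[OF inj])
  also have "\<dots> = a powi n * x"
    by (simp add: S sum_distrib_left power_int_add assms(2) algebra_simps)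
  finally show ?thesis using S by (auto simp: G_mem intro!: exI[of _ "(\<lambda>k. k + n) ` S"] exI[of _ "\<lambda>k. c (k - n)"])
qed

lemma G_int_powi: "a \<noteq> 0 \<Longrightarrow> of_int z * a powi n \<in> int_alpha_ring a"
proof -
  have "of_int z * a powi n = (\<Sum>k\<in>{n}. of_int z * a powi k)" by simp
  then show ?thesis by (auto simp: G_mem intro!: exI[of _ "{n}"] exI[of _ "\<lambda>_. z"])
qed


lemma Cshift:
  fixes a :: real
  assumes "a \<noteq> 0"
  shows "(\<exists>n::int. a powi n * ((e - real k) / a ^ i) - y \<in> int_alpha_ring a) \<longleftrightarrow>
         (\<exists>n::int. a powi n * e - y \<in> int_alpha_ring a)"
proof -
  have id: "a powi n * ((e - real k) / a ^ i) - y = (a powi (n - int i) * e - y) - of_int (int k) * a powi (n - int i)" for n :: int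
  proof -
    have pd: "a powi (n - int i) = a powi n / a ^ i" using assms by (simp add: power_int_diff)
    show ?thesis unfolding pd by (simp add: algebra_simps diff_divide_distrib)
  qed
  show ?thesis
  proof
    assume "\<exists>n::int. a powi n * ((e - real k) / a ^ i) - y \<in> int_alpha_ring a"
    then obtain n where n: "a powi n * ((e - real k) / a ^ i) - y \<in> int_alpha_ring a" by blast
    have "a powi (n - int i) * e - y = (a powi n * ((e - real k) / a ^ i) - y) + of_int (int k) * a powi (n - int i)"
      using id[of n] by simp
    also have "\<dots> \<in> int_alpha_ring a" by (rule G_add[OF n G_int_powi[OF assms]])
    finally show "\<exists>n::int. a powi n * e - y \<in> int_alpha_ring a" by blast
  next
    assume "\<exists>n::int. a powi n * e - y \<in> int_alpha_ring a"
    then obtain n where n: "a powi n * e - y \<in> int_alpha_ring a" by blast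
    have "a powi (n + int i) * ((e - real k) / a ^ i) - y = (a powi n * e - y) - of_int (int k) * a powi n"
      using id[of "n + int i"] by simp
    also have "\<dots> \<in> int_alpha_ring a" by (rule G_diff[OF n G_int_powi[OF assms]])
    finally show "\<exists>n::int. a powi n * ((e - real k) / a ^ i) - y \<in> int_alpha_ring a" by blast
  qed
qed

lemma key:
  fixes F :: "real \<Rightarrow> 'k::field_char_0" and a :: real
  assumes a1: "a > 1" and ws: "hahn_series F" and Pd: "P d \<noteq> 0" and eq: "mahler_eq a P d F"
    and Fy: "F y \<noteq> 0"
  shows "\<exists>m. (\<exists>i\<le>d. \<exists>j\<le>d. i \<noteq> j \<and> a^i*m + real (LEAST k. coeff (P i) k \<noteq> 0) = a^j*m + real (LEAST k. coeff (P j) k \<noteq> 0))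
           \<and> (\<exists>n::int. a powi n * m - y \<in> int_alpha_ring a)"
proof -
  define v where "v i = (LEAST k. coeff (P i) k \<noteq> 0)" for i
  define C where "C = {z. \<exists>n::int. a powi n * z - y \<in> int_alpha_ring a}"
  have a0: "a \<noteq> 0" using a1 by simp
  have CS: "(e - real k) / a ^ i \<in> C \<longleftrightarrow> e \<in> C" for e k i
    unfolding C_def using Cshift[OF a0] by simp
  have "0 \<in> int_alpha_ring a" using G_int_powi[OF a0, of 0 0] by simp
  then have yC: "y \<in> C" unfolding C_def by (intro CollectI exI[of _ 0]) simp
  define S where "S = {z \<in> C. F z \<noteq> 0}"
  have "S \<subseteq> hahn_support F" "S \<noteq> {}" using yC Fy by (auto simp: S_def hahn_support_def)
  then have "\<exists>m\<in>S. \<forall>z\<in>S. m \<le> z"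
    using ws unfolding hahn_series_def well_ordered_set_def by (elim allE[of _ S]) (elim impE)
  then obtain m where mS: "m \<in> S" and mmin: "\<And>z. z \<in> S \<Longrightarrow> m \<le> z" by blast
  have mC: "m \<in> C" and Fm: "F m \<noteq> 0" using mS by (auto simp: S_def)
  have vle: "v i \<le> k" if "coeff (P i) k \<noteq> 0" for i k
    unfolding v_def by (rule Least_le) (rule that)
  have vc: "coeff (P i) (v i) \<noteq> 0" if "P i \<noteq> 0" for i
    unfolding v_def by (rule LeastI[of _ "degree (P i)"]) (use that in simp)
  have vdeg: "v i \<le> degree (P i)" if "P i \<noteq> 0" for i
    using vle[of i "degree (P i)"] that by simp
  define J where "J = {i. i \<le> d \<and> P i \<noteq> 0}"
  define f where "f i = a^i * m + real (v i)" for i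
  have "J \<subseteq> {..d}" by (auto simp: J_def)
  then have Jfin: "finite J" by (rule finite_subset) simp
  have dJ: "d \<in> J" using Pd by (simp add: J_def)
  then have Jne: "J \<noteq> {}" by blast
  obtain i0 where i0J: "i0 \<in> J" and i0min: "\<And>j. j \<in> J \<Longrightarrow> f i0 \<le> f j"
  proof -
    have "Min (f ` J) \<in> f ` J" using Jfin Jne by (intro Min_in) auto
    then obtain i0 where i0: "i0 \<in> J" "f i0 = Min (f ` J)" by (elim imageE) simp
    have "f i0 \<le> f j" if "j \<in> J" for j
      unfolding i0(2) using Jfin that by (intro Min_le) auto
    then show ?thesis using that i0(1) by blast
  qed
  show ?thesis
  proof (rule ccontr)
    assume H: "\<not> ?thesis"
    have uniq: "j = i0" if "j \<in> J" "f j = f i0" for j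
    proof (rule ccontr)
      assume ne: "j \<noteq> i0"
      have A: "j \<le> d" "i0 \<le> d" using that(1) i0J by (auto simp: J_def)
      have B: "a^j*m + real (LEAST k. coeff (P j) k \<noteq> 0) = a^i0*m + real (LEAST k. coeff (P i0) k \<noteq> 0)"
        using that(2) by (simp add: f_def v_def)
      from mC obtain n where N: "a powi n * m - y \<in> int_alpha_ring a" by (auto simp: C_def)
      have "\<exists>i\<le>d. \<exists>j\<le>d. i \<noteq> j \<and> a^i*m + real (LEAST k. coeff (P i) k \<noteq> 0) = a^j*m + real (LEAST k. coeff (P j) k \<noteq> 0)"
        using A B ne by blast
      with N H show False by blast
    qed
    define \<mu> where "\<mu> = f i0"
    have mu_m: "(\<mu> - real (v i0)) / a ^ i0 = m" using a0 by (simp add: \<mu>_def f_def)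
    have muC: "\<mu> \<in> C" using CS[of \<mu> "v i0" i0] mC mu_m by simp
    have tm: "coeff (P i) k * F ((\<mu> - real k) / a ^ i) =
       (if i = i0 \<and> k = v i0 then coeff (P i0) (v i0) * F m else 0)" if "i \<le> d" for i k
    proof (cases "i = i0 \<and> k = v i0")
      case True then show ?thesis using mu_m by simp
    next
      case False
      show ?thesis
      proof (cases "coeff (P i) k = 0")
        case True then show ?thesis by (simp only: if_not_P[OF False] mult_zero_left)
      next
        case cnz: False
        have iJ: "i \<in> J" using cnz that by (auto simp: J_def)
        have vk: "v i \<le> k" using vle cnz by blast
        have "F ((\<mu> - real k) / a ^ i) = 0"
        proof (rule ccontr)
          assume Fw: "F ((\<mu> - real k) / a ^ i) \<noteq> 0"
          have "(\<mu> - real k) / a ^ i \<in> C" using CS muC by blast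
          then have "m \<le> (\<mu> - real k) / a ^ i" using Fw mmin by (auto simp: S_def)
          then have "a ^ i * m \<le> \<mu> - real k" using a1 by (simp add: field_simps)
          moreover have "f i0 \<le> f i" using i0min iJ by blast
          ultimately have "k = v i" "f i = f i0" using vk by (auto simp: f_def \<mu>_def)
          then show False using uniq[OF iJ] False by auto
        qed
        then show ?thesis by (simp only: if_not_P[OF False] mult_zero_right)
      qed
    qed
    have "0 = (\<Sum>i\<le>d. \<Sum>k\<le>degree (P i). coeff (P i) k * F ((\<mu> - real k) / a ^ i))"
      using eq unfolding mahler_eq_def by simp
    also have "\<dots> = (\<Sum>i\<le>d. \<Sum>k\<le>degree (P i). (if i = i0 \<and> k = v i0 then coeff (P i0) (v i0) * F m else 0))"
      using tm by simp
    also have "\<dots> = (\<Sum>i\<le>d. if i = i0 then coeff (P i0) (v i0) * F m else 0)"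
      by (rule sum.cong) (use i0J in \<open>auto simp: vdeg J_def\<close>)
    also have "\<dots> = coeff (P i0) (v i0) * F m" using i0J by (simp add: J_def)
    finally show False using vc[of i0] i0J Fm by (simp add: J_def)
  qed
qed


lemma scale_sum:
  fixes p :: "'a::comm_ring_1 poly"
  shows "(\<Sum>j\<le>degree (\<Sum>k\<le>degree p. monom (coeff p k) (l*k)). coeff (\<Sum>k\<le>degree p. monom (coeff p k) (l*k)) j * h j)
       = (\<Sum>k\<le>degree p. coeff p k * h (l*k))"
proof -
  define Q where "Q = (\<Sum>k\<le>degree p. monom (coeff p k) (l*k))"
  have cQ: "coeff Q j = (\<Sum>k\<le>degree p. if l*k = j then coeff p k else 0)" for j
    by (simp add: Q_def coeff_sum coeff_monom)
  have dQ: "degree Q \<le> l * degree p"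
    unfolding Q_def by (rule degree_sum_le) (auto intro: order.trans[OF degree_monom_le])
  have "(\<Sum>j\<le>degree Q. coeff Q j * h j) = (\<Sum>j\<le>l * degree p. coeff Q j * h j)"
    by (rule sum.mono_neutral_left) (use dQ in \<open>auto simp: coeff_eq_0\<close>)
  also have "\<dots> = (\<Sum>j\<le>l * degree p. \<Sum>k\<le>degree p. if j = l*k then coeff p k * h (l*k) else 0)"
    by (rule sum.cong) (auto simp: cQ sum_distrib_right intro!: sum.cong)
  also have "\<dots> = (\<Sum>k\<le>degree p. \<Sum>j\<le>l * degree p. if j = l*k then coeff p k * h (l*k) else 0)"
    by (rule sum.swap)
  also have "\<dots> = (\<Sum>k\<le>degree p. coeff p k * h (l*k))"
    by (rule sum.cong) auto
  finally show ?thesis by (simp add: Q_def)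
qed

lemma scale_nz:
  fixes p :: "'a::comm_ring_1 poly"
  assumes "p \<noteq> 0" "l > 0"
  shows "(\<Sum>k\<le>degree p. monom (coeff p k) (l*k)) \<noteq> 0"
proof -
  have "coeff (\<Sum>k\<le>degree p. monom (coeff p k) (l*k)) (l * degree p) = (\<Sum>k\<le>degree p. if k = degree p then coeff p k else 0)"
    using assms(2) by (simp add: coeff_sum coeff_monom)
  also have "\<dots> = lead_coeff p" by simp
  finally show ?thesis using assms(1) by auto
qed

lemma mahler_scale:
  fixes F :: "real \<Rightarrow> 'k::comm_ring_1" and a :: real
  assumes eq: "mahler_eq a P d F" and Pd: "P d \<noteq> 0" and l: "l > 0"
  shows "is_mahler a (hahn_subst F (real l))"
proof -
  define Q where "Q i = (\<Sum>k\<le>degree (P i). monom (coeff (P i) k) (l*k))" for i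
  have "mahler_eq a Q d (hahn_subst F (real l))"
    unfolding mahler_eq_def
  proof
    fix e :: real
    have "(\<Sum>i\<le>d. \<Sum>k\<le>degree (Q i). coeff (Q i) k * hahn_subst F (real l) ((e - real k) / a ^ i))
        = (\<Sum>i\<le>d. \<Sum>k\<le>degree (P i). coeff (P i) k * F ((e / real l - real k) / a ^ i))"
    proof (rule sum.cong[OF refl])
      fix i
      show "(\<Sum>k\<le>degree (Q i). coeff (Q i) k * hahn_subst F (real l) ((e - real k) / a ^ i))
        = (\<Sum>k\<le>degree (P i). coeff (P i) k * F ((e / real l - real k) / a ^ i))"
        unfolding Q_def scale_sum hahn_subst_def using l
        by (intro sum.cong refl) (simp add: field_simps)
    qed
    also have "\<dots> = 0" using eq unfolding mahler_eq_def by blast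
    finally show "(\<Sum>i\<le>d. \<Sum>k\<le>degree (Q i). coeff (Q i) k * hahn_subst F (real l) ((e - real k) / a ^ i)) = 0" .
  qed
  moreover have "Q d \<noteq> 0" unfolding Q_def by (rule scale_nz[OF Pd l])
  ultimately show ?thesis unfolding is_mahler_def by blast
qed

theorem mainTheorem9:
  fixes F :: "real \<Rightarrow> 'k::field_char_0"
    and \<alpha> :: rat
    and P :: "nat \<Rightarrow> 'k poly"
    and d :: nat
  assumes "number_field_type TYPE('k)"
    and "\<alpha> > 1"
    and "hahn_series F"
    and "P d \<noteq> 0"
    and "mahler_eq (of_rat \<alpha>) P d F"
  shows "\<exists>l::nat. l > 0 \<and>
           hahn_support (hahn_subst F (real l)) \<subseteq> int_alpha_ring (of_rat \<alpha>) \<and>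
           hahn_series (hahn_subst F (real l)) \<and>
           is_mahler (of_rat \<alpha>) (hahn_subst F (real l))"
proof -
  define a where "a = (of_rat \<alpha> :: real)"
  have a1: "a > 1" using assms(2) unfolding a_def by (metis of_rat_1 of_rat_less)
  have eqa: "mahler_eq a P d F" using assms(5) by (simp add: a_def)
  define v where "v i = (LEAST k. coeff (P i) k \<noteq> 0)" for i
  define r where "r i j = (of_nat (v j) - of_nat (v i)) / (\<alpha>^i - \<alpha>^j)" for i j :: nat
  define L :: int where "L = (\<Prod>ij\<in>{..d}\<times>{..d}. snd (quotient_of (r (fst ij) (snd ij))))"
  have Lpos: "L > 0" unfolding L_def by (rule prod_pos) (simp add: quotient_of_denom_pos')
  define l where "l = nat L"
  have lpos: "l > 0" using Lpos by (simp add: l_def)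
  have lL: "real l = of_int L" using Lpos by (simp add: l_def)
  have keyc: "real l * y \<in> int_alpha_ring a" if Fy: "F y \<noteq> 0" for y
  proof -
    obtain m i j n where ij: "i \<le> d" "j \<le> d" "i \<noteq> j"
      and eqm: "a^i*m + real (v i) = a^j*m + real (v j)" and mn: "a powi n * m - y \<in> int_alpha_ring a"
      using key[of a F P d y, OF a1 assms(3) assms(4) eqa Fy] unfolding v_def by blast
    have aij: "a^i \<noteq> a^j" using a1 ij by simp
    have m1: "m = (real (v j) - real (v i)) / (a^i - a^j)" using eqm aij
      by (simp add: field_simps)
    have mr: "m = of_rat (r i j)" unfolding m1 r_def a_def
      by (simp add: of_rat_divide of_rat_diff of_rat_power)
    obtain p q where pq: "quotient_of (r i j) = (p, q)" by (cases "quotient_of (r i j)")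
    have rq: "r i j = of_int p / of_int q" by (rule quotient_of_div[OF pq])
    have qpos: "q > 0" using quotient_of_denom_pos[OF pq] .
    have "q dvd L" unfolding L_def
      using dvd_prodI[of "{..d}\<times>{..d}" "(i,j)" "\<lambda>ij. snd (quotient_of (r (fst ij) (snd ij)))"] pq ij by simp
    then obtain t where Lt: "L = q * t" by (elim dvdE)
    have lm: "real l * m = of_int (t * p)"
      using qpos unfolding lL Lt mr rq by (simp add: of_rat_divide field_simps)
    have "real l * y = of_int (t * p) * a powi n - of_int L * (a powi n * m - y)"
      unfolding lm[symmetric] lL by (simp add: algebra_simps)
    also have "\<dots> \<in> int_alpha_ring a"
      using a1 by (intro G_diff G_int_powi G_intmult mn) simp
    finally show ?thesis .
  qed
  show ?thesis
  proof (intro exI[of _ l] conjI lpos)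
    show "hahn_support (hahn_subst F (real l)) \<subseteq> int_alpha_ring (of_rat \<alpha>)"
    proof
      fix e assume "e \<in> hahn_support (hahn_subst F (real l))"
      then have "F (e / real l) \<noteq> 0" by (simp add: hahn_support_def hahn_subst_def)
      then have "real l * (e / real l) \<in> int_alpha_ring a" by (rule keyc)
      then show "e \<in> int_alpha_ring (of_rat \<alpha>)" using lpos by (simp add: a_def)
    qed
    show "hahn_series (hahn_subst F (real l))"
      unfolding hahn_series_def well_ordered_set_def
    proof (intro allI impI)
      fix A assume A: "A \<subseteq> hahn_support (hahn_subst F (real l))" "A \<noteq> {}"
      have "(\<lambda>e. e / real l) ` A \<subseteq> hahn_support F" "(\<lambda>e. e / real l) ` A \<noteq> {}"
        using A by (auto simp: hahn_support_def hahn_subst_def)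
      then obtain b where "b \<in> (\<lambda>e. e / real l) ` A" "\<forall>z\<in>(\<lambda>e. e / real l) ` A. b \<le> z"
        using assms(3) unfolding hahn_series_def well_ordered_set_def by blast
      then obtain x where "x \<in> A" "\<forall>z\<in>A. x / real l \<le> z / real l" by auto
      then show "\<exists>m\<in>A. \<forall>z\<in>A. m \<le> z" using lpos by (auto simp: divide_le_cancel)
    qed
    show "is_mahler (of_rat \<alpha>) (hahn_subst F (real l))"
      by (rule mahler_scale[OF assms(5) assms(4) lpos])
  qed
qed

end
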